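(* For $0<p<1$ let $f(k,p)=\frac{-1}{\log(1-p)}\frac{p^k}{k}$, $k\ge1$, be the logarithmic probability mass function. Let $X$ have pmf $f(\cdot,p)$ and $Y$ have pmf $f(\cdot,q)$ with $0<p,q<1$. Then $X\le_{st}Y$ if and only if $p\le q$, and $X\le_{wd}Y$ if and only if $p\le q$.
   Context: For a real random variable $X$, its Lévy concentration function is $Q_X(\varepsilon)=\sup_{x_0\in\mathbb{R}}\Pr\{X\in[x_0,x_0+\varepsilon]\}$, $\varepsilon>0$. For random variables $X,Y$, write $X\le_{wd}Y$ if $Q_X(\varepsilon)\ge Q_Y(\varepsilon)$ for all $\varepsilon>0$. $X\le_{st}Y$ denotes the usual stochastic order: $\Pr(X>t)\le\Pr(Y>t)$ for all $t$. *)

theory Defs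
  imports "HOL-Probability.Probability"
begin

definition logarithmic_pmf :: "real \<Rightarrow> nat \<Rightarrow> real" where
  "logarithmic_pmf p k = (if k \<ge> 1 then (-1 / ln (1 - p)) * (p ^ k / real k) else 0)"

definition levy_conc :: "real measure \<Rightarrow> real \<Rightarrow> real" where
  "levy_conc M \<epsilon> = (SUP x0::real. measure M {x0..x0 + \<epsilon>})"

definition st_le :: "real measure \<Rightarrow> real measure \<Rightarrow> bool" where
  "st_le M N \<longleftrightarrow> (\<forall>t::real. measure M {t<..} \<le> measure N {t<..})"

definition wd_le :: "real measure \<Rightarrow> real measure \<Rightarrow> bool" where
  "wd_le M N \<longleftrightarrow> (\<forall>\<epsilon>>0. levy_conc M \<epsilon> \<ge> levy_conc N \<epsilon>)"

end

theory Submission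
  imports Defs
begin

definition gg :: "real \<Rightarrow> nat \<Rightarrow> real" where "gg p i = p^(Suc i) / real (Suc i)"

lemma gg_summable: assumes "0 \<le> p" "p < 1" shows "summable (gg p)"
proof (rule summable_comparison_test[where g="\<lambda>i. p^i"])
  show "\<exists>N. \<forall>n\<ge>N. norm (gg p n) \<le> p ^ n"
  proof (intro exI allI impI)
    fix n :: nat
    have "p^(Suc n) / real (Suc n) \<le> p^(Suc n) / 1" using assms by (intro divide_left_mono) auto
    also have "\<dots> \<le> p^n" using assms by (simp add: mult_left_le_one_le)
    finally show "norm (gg p n) \<le> p^n" using assms by (simp add: gg_def)
  qed
  show "summable (\<lambda>i. p^i)" using assms by (simp add: summable_geometric)
qed

lemma gg_ln: assumes "0 < p" "p < 1" shows "suminf (gg p) = - ln (1 - p)"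
proof -
  have "ln (1-p) = (\<Sum> n. (-1)^n * (1 / real (n + 1)) * ((1-p) - 1)^(Suc n))"
    using assms by (intro ln_series) auto
  also have "\<dots> = (\<Sum>n. - gg p n)"
  proof (rule arg_cong[where f=suminf], rule ext)
    fix n
    have L1: "((-1)::real) ^ n * (- p) ^ Suc n = - (p ^ Suc n)"
      by (cases "even n") (simp_all add: minus_one_power_iff power_minus_odd power_minus_even)
    have "(-1)^n * (1 / real (n + 1)) * ((1-p) - 1)^(Suc n) = ((-1)^n * (- p) ^ Suc n) / real (Suc n)"
      by simp
    also have "\<dots> = - gg p n" unfolding gg_def by (simp only: L1)
    finally show "(-1)^n * (1 / real (n + 1)) * ((1-p) - 1)^(Suc n) = - gg p n" .
  qed
  also have "\<dots> = - suminf (gg p)"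
    using gg_summable[of p] assms by (intro suminf_minus) auto
  finally show ?thesis by simp
qed

lemma gg_pos: "0 < p \<Longrightarrow> 0 < gg p i" by (simp add: gg_def)

lemma h1: "0 < (a::real) \<Longrightarrow> 0 < b \<Longrightarrow> 0 < c \<Longrightarrow> 0 < d \<Longrightarrow> c / a < d / b \<Longrightarrow> b * c < a * d"
  by (simp add: divide_less_eq less_divide_eq field_simps)
lemma h2: "0 < (a::real) \<Longrightarrow> 0 < b \<Longrightarrow> 0 < c \<Longrightarrow> 0 < d \<Longrightarrow> 0 < n \<Longrightarrow> a * d < b * c \<Longrightarrow> a / n / c < b / n / d"
  by (simp add: divide_less_eq less_divide_eq field_simps)
lemma h3: "0 < (sp::real) \<Longrightarrow> 0 < sq \<Longrightarrow> tp * sq < tq * sp \<Longrightarrow> 0 < sp + tp \<Longrightarrow> 0 < sq+tq \<Longrightarrow> sq / (sq+tq) < sp / (sp + tp)"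
  by (simp add: divide_less_eq less_divide_eq field_simps)
lemma h4: "0 < (sp::real) \<Longrightarrow> 0 < sq \<Longrightarrow> tp / sp < tq / sq \<Longrightarrow> tp * sq < tq * sp"
  by (simp add: divide_less_eq less_divide_eq field_simps)
lemma h5: "0 < (x::real) \<Longrightarrow> x^N = x^(Suc i) * x^e \<Longrightarrow> x^(Suc i) / real (Suc i) / x^N = (1/x)^e / real (Suc i)"
  by (simp add: power_one_over)

lemma key_strict:
  assumes "0 < p" "p < q" "q < 1" "1 \<le> n"
  shows "(\<Sum>i<n. gg q i) / suminf (gg q) < (\<Sum>i<n. gg p i) / suminf (gg p)"
proof -
  define S where "S x = (\<Sum>i<n. gg x i)" for x
  define T where "T x = (\<Sum>j. gg x (j + n))" for x
  have sp: "summable (gg x)" if "0 < x" "x < 1" for x using gg_summable that by auto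
  have st: "summable (\<lambda>j. gg x (j + n))" if "0 < x" "x < 1" for x
    using sp[OF that] by (simp add: summable_iff_shift)
  have L: "suminf (gg x) = S x + T x" if "0 < x" "x < 1" for x
    using suminf_split_initial_segment[OF sp[OF that], of n] unfolding S_def T_def by simp
  have Spos: "0 < S x" if "0 < x" for x
    unfolding S_def using assms(4) that by (intro sum_pos) (auto simp: gg_pos lessThan_empty_iff)
  have Tpos: "0 \<le> T x" if "0 < x" "x < 1" for x
    unfolding T_def using st[OF that] that by (intro suminf_nonneg) (auto intro: less_imp_le gg_pos)
  have trm: "gg p (j+n) / S p < gg q (j+n) / S q" for j
  proof -
    define N where "N = Suc (j+n)"
    have eq: "S x / x^N = (\<Sum>i<n. (1/x)^(N - Suc i) / real (Suc i))" if "0 < x" for x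
    proof -
      have "S x / x^N = (\<Sum>i<n. gg x i / x^N)" unfolding S_def by (simp add: sum_divide_distrib)
      also have "\<dots> = (\<Sum>i<n. (1/x)^(N - Suc i) / real (Suc i))"
      proof (rule sum.cong)
        fix i assume "i \<in> {..<n}"
        then have "N = Suc i + (N - Suc i)" unfolding N_def by auto
        then have "x^N = x^(Suc i) * x^(N - Suc i)" by (metis power_add)
        then show "gg x i / x^N = (1/x)^(N - Suc i) / real (Suc i)"
          using h5[OF that] by (simp add: gg_def)
      qed simp
      finally show ?thesis .
    qed
    have "S q / q^N < S p / p^N"
    proof -
      have "(\<Sum>i<n. (1/q)^(N - Suc i) / real (Suc i)) < (\<Sum>i<n. (1/p)^(N - Suc i) / real (Suc i))"
      proof (rule sum_strict_mono)
        fix i assume "i \<in> {..<n}"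
        then have e: "N - Suc i \<noteq> 0" unfolding N_def by auto
        have "1/q < 1/p" using assms by (simp add: frac_less2)
        then have "(1/q)^(N - Suc i) < (1/p)^(N - Suc i)"
          using e assms by (intro power_strict_mono) auto
        then show "(1/q)^(N - Suc i) / real (Suc i) < (1/p)^(N - Suc i) / real (Suc i)"
          by (simp add: divide_strict_right_mono)
      qed (use assms in \<open>auto simp: lessThan_empty_iff\<close>)
      moreover have "0 < q" using assms by simp
      ultimately show ?thesis using eq[OF assms(1)] eq[of q] by simp
    qed
    moreover have "0 < S q" "0 < S p" "0 < p^N" "0 < q^N" using Spos assms by auto
    ultimately have "p^N * S q < q^N * S p" using h1 by blast
    then have "p^N / real N / S p < q^N / real N / S q"
      using \<open>0 < S q\<close> \<open>0 < S p\<close> \<open>0 < p^N\<close> \<open>0 < q^N\<close>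
      by (intro h2) (auto simp: N_def)
    then show ?thesis by (simp add: gg_def N_def)
  qed
  have "T p / S p < T q / S q"
  proof -
    have "T p / S p = (\<Sum>j. gg p (j+n) / S p)" unfolding T_def
      using st assms by (intro suminf_divide[symmetric]) auto
    moreover have "T q / S q = (\<Sum>j. gg q (j+n) / S q)" unfolding T_def
      using st assms by (intro suminf_divide[symmetric]) auto
    moreover have "(\<Sum>j. gg p (j+n) / S p) < (\<Sum>j. gg q (j+n) / S q)"
    proof -
      have s1: "summable (\<lambda>j. gg p (j+n) / S p)" "summable (\<lambda>j. gg q (j+n) / S q)"
        using st assms by (auto intro: summable_divide)
      have "0 < (\<Sum>j. gg q (j+n) / S q - gg p (j+n) / S p)"
        using trm s1 by (intro suminf_pos summable_diff) auto
      also have "\<dots> = (\<Sum>j. gg q (j+n) / S q) - (\<Sum>j. gg p (j+n) / S p)"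
        using s1 by (intro suminf_diff[symmetric]) auto
      finally show ?thesis by simp
    qed
    ultimately show ?thesis by simp
  qed
  then have "T p * S q < T q * S p" using Spos assms h4 by auto
  moreover have "0 < S p + T p" "0 < S q + T q" using Spos Tpos assms
    by (auto intro: add_pos_nonneg)
  ultimately have "S q / (S q + T q) < S p / (S p + T p)" using h3 Spos assms by auto
  then show ?thesis using L[of p] L[of q] assms unfolding S_def by simp
qed

lemma tail_eq:
  fixes X :: "nat pmf" and t :: real
  shows "measure X (real -` {t<..}) = (if t < 0 then 1 else 1 - measure X {..nat \<lfloor>t\<rfloor>})"
proof (cases "t < 0")
  case True
  then have "real -` {t<..} = UNIV" by auto
  then show ?thesis using True by simp
next
  case False
  have "real -` {t<..} = UNIV - {..nat \<lfloor>t\<rfloor>}"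
  proof (intro set_eqI iffI)
    fix k assume "k \<in> real -` {t<..}"
    then have "t < real k" by simp
    then have "\<not> int k \<le> \<lfloor>t\<rfloor>" by (simp add: le_floor_iff not_le)
    moreover have "0 \<le> \<lfloor>t\<rfloor>" using False by simp
    ultimately show "k \<in> UNIV - {..nat \<lfloor>t\<rfloor>}" by (auto simp: le_nat_iff)
  next
    fix k assume "k \<in> UNIV - {..nat \<lfloor>t\<rfloor>}"
    moreover have "0 \<le> \<lfloor>t\<rfloor>" using False by simp
    ultimately have "\<not> int k \<le> \<lfloor>t\<rfloor>" by (auto simp: le_nat_iff)
    then show "k \<in> real -` {t<..}" by (simp add: le_floor_iff not_le)
  qed
  then show ?thesis using False measure_pmf.prob_compl[of "{..nat \<lfloor>t\<rfloor>}" X]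
    by (simp add: Compl_eq_Diff_UNIV)
qed

lemma st_iff:
  fixes X Y :: "nat pmf"
  shows "st_le (measure_pmf (map_pmf real X)) (measure_pmf (map_pmf real Y))
     \<longleftrightarrow> (\<forall>m. measure Y {..m} \<le> measure X {..m})"
proof
  assume H: "st_le (measure_pmf (map_pmf real X)) (measure_pmf (map_pmf real Y))"
  show "\<forall>m. measure Y {..m} \<le> measure X {..m}"
  proof
    fix m :: nat
    have "measure X (real -` {real m<..}) \<le> measure Y (real -` {real m<..})"
      using H unfolding st_le_def by simp
    then show "measure Y {..m} \<le> measure X {..m}" by (simp add: tail_eq)
  qed
next
  assume H: "\<forall>m. measure Y {..m} \<le> measure X {..m}"
  show "st_le (measure_pmf (map_pmf real X)) (measure_pmf (map_pmf real Y))"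
    unfolding st_le_def using H by (simp add: tail_eq)
qed

lemma levy_eq:
  fixes X :: "nat pmf" and \<epsilon> :: real
  assumes e: "0 < \<epsilon>" and z: "pmf X 0 = 0"
    and mono: "\<And>i j. 1 \<le> i \<Longrightarrow> i \<le> j \<Longrightarrow> pmf X j \<le> pmf X i"
  shows "levy_conc (measure_pmf (map_pmf real X)) \<epsilon> = measure X {..Suc (nat \<lfloor>\<epsilon>\<rfloor>)}"
proof -
  define r where "r = nat \<lfloor>\<epsilon>\<rfloor>"
  have r: "int r = \<lfloor>\<epsilon>\<rfloor>" using e unfolding r_def by simp
  have atM: "measure X {..Suc r} = (\<Sum>i\<le>r. pmf X (Suc i))"
    using z by (simp add: measure_measure_pmf_finite sum.atMost_Suc_shift del: sum.atMost_Suc)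
  show ?thesis unfolding levy_conc_def r_def[symmetric]
  proof (rule cSup_eq_maximum)
    have "real -` {1..1+\<epsilon>} = {1..Suc r}"
    proof (intro set_eqI iffI)
      fix k assume "k \<in> real -` {1..1+\<epsilon>}"
      then have "1 \<le> real k" "real k - 1 \<le> \<epsilon>" by auto
      then have "int k - 1 \<le> \<lfloor>\<epsilon>\<rfloor>" by (simp add: le_floor_iff)
      then show "k \<in> {1..Suc r}" using r \<open>1 \<le> real k\<close> by auto
    next
      fix k assume "k \<in> {1..Suc r}"
      then have "int k - 1 \<le> \<lfloor>\<epsilon>\<rfloor>" "1 \<le> k" using r by auto
      then have "real_of_int (int k - 1) \<le> \<epsilon>" by (simp add: le_floor_iff)
      then show "k \<in> real -` {1..1+\<epsilon>}" using \<open>1 \<le> k\<close> by auto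
    qed
    moreover have "measure X {1..Suc r} = measure X {..Suc r}"
    proof -
      have "{..Suc r} = insert 0 {1..Suc r}"
        using atLeastAtMost_insertL[of 0 "Suc r"] by (simp add: atMost_atLeast0)
      then have "sum (pmf X) {..Suc r} = sum (pmf X) (insert 0 {1..Suc r})" by (rule arg_cong)
      also have "\<dots> = pmf X 0 + sum (pmf X) {1..Suc r}" by (rule sum.insert) auto
      finally have "sum (pmf X) {..Suc r} = sum (pmf X) {1..Suc r}" by (simp only: z add_0_left)
      then show ?thesis by (simp only: measure_measure_pmf_finite[OF finite_atMost] measure_measure_pmf_finite[OF finite_atLeastAtMost])
    qed
    ultimately have H: "measure_pmf.prob (map_pmf real X) {1..1+\<epsilon>} = measure X {..Suc r}"
      by (simp only: measure_map_pmf)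
    show "measure X {..Suc r} \<in> range (\<lambda>x0. measure_pmf.prob (map_pmf real X) {x0..x0 + \<epsilon>})"
    proof (rule image_eqI[where x=1])
      show "measure X {..Suc r} = measure_pmf.prob (map_pmf real X) {1..1 + \<epsilon>}" using H by (rule sym)
    qed simp
  next
    fix v assume "v \<in> range (\<lambda>x0. measure_pmf.prob (map_pmf real X) {x0..x0 + \<epsilon>})"
    then obtain x0 where v: "v = measure X (real -` {x0..x0 + \<epsilon>})" by auto
    define a where "a = nat \<lceil>x0\<rceil>"
    have sub: "real -` {x0..x0 + \<epsilon>} \<subseteq> {a..<a + Suc r}"
    proof
      fix k assume "k \<in> real -` {x0..x0 + \<epsilon>}"
      then have k1: "x0 \<le> real k" and k2: "real k \<le> x0 + \<epsilon>" by auto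
      have "x0 \<le> real_of_int (int k)" using k1 by (simp only: of_int_of_nat_eq)
      then have "\<lceil>x0\<rceil> \<le> int k" by (rule ceiling_le)
      then have ak: "a \<le> k" unfolding a_def by (simp only: nat_le_iff)
      have c0: "x0 \<le> real_of_int \<lceil>x0\<rceil>" by (rule le_of_int_ceiling)
      have "real_of_int (int k - \<lceil>x0\<rceil>) = real k - real_of_int \<lceil>x0\<rceil>" by simp
      then have "real_of_int (int k - \<lceil>x0\<rceil>) \<le> \<epsilon>" using k2 c0 by linarith
      then have "int k - \<lceil>x0\<rceil> \<le> \<lfloor>\<epsilon>\<rfloor>" by (simp add: le_floor_iff)
      moreover have "\<lceil>x0\<rceil> \<le> int a" unfolding a_def by simp
      ultimately have "k \<le> a + r" using r by linarith
      then show "k \<in> {a..<a + Suc r}" using ak by auto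
    qed
    have "v \<le> measure X {a..<a + Suc r}"
      unfolding v by (rule measure_pmf.finite_measure_mono[OF sub]) simp
    also have "\<dots> \<le> measure X {..Suc r}"
    proof (cases "a = 0")
      case True
      then show ?thesis by (intro measure_pmf.finite_measure_mono) auto
    next
      case False
      have "measure X {a..<a + Suc r} = (\<Sum>i\<in>{0..<Suc r}. pmf X (a + i))"
        unfolding measure_measure_pmf_finite[OF finite_atLeastLessThan]
          sum.atLeastLessThan_shift_0[of "pmf X" a "a + Suc r"] by (simp add: comp_def)
      also have "\<dots> = (\<Sum>i\<le>r. pmf X (a + i))"
        by (intro sum.cong) auto
      also have "\<dots> \<le> (\<Sum>i\<le>r. pmf X (Suc i))"
        using False by (intro sum_mono mono) auto
      finally show ?thesis using atM by simp
    qed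
    finally show "v \<le> measure X {..Suc r}" .
  qed
qed

lemma log_cdf:
  fixes X :: "nat pmf"
  assumes "0 < p" "p < 1" "\<And>k. pmf X k = logarithmic_pmf p k"
  shows "measure X {..m} = (\<Sum>i<m. gg p i) / suminf (gg p)"
proof (induction m)
  case 0
  then show ?case using assms by (simp add: measure_measure_pmf_finite logarithmic_pmf_def)
next
  case (Suc m)
  have "measure X {..Suc m} = measure X {..m} + pmf X (Suc m)"
    by (simp add: measure_measure_pmf_finite)
  also have "pmf X (Suc m) = gg p m / suminf (gg p)"
    using assms by (simp add: logarithmic_pmf_def gg_ln gg_def)
  finally show ?case using Suc by (simp add: add_divide_distrib)
qed

lemma log_mono:
  assumes "0 < p" "p < 1" "1 \<le> i" "i \<le> j"
  shows "logarithmic_pmf p j \<le> logarithmic_pmf p i"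
proof -
  have c: "0 < -1 / ln (1 - p)" using assms by (simp add: ln_less_zero)
  have "p^j / real j \<le> p^i / real i"
    using assms by (intro frac_le power_decreasing) auto
  then have "(-1 / ln (1 - p)) * (p^j / real j) \<le> (-1 / ln (1 - p)) * (p^i / real i)"
    using c by (intro mult_left_mono) auto
  then show ?thesis using assms unfolding logarithmic_pmf_def by simp
qed

lemma cdf_cmp:
  fixes X Y :: "nat pmf"
  assumes "0 < p" "p < 1" "0 < q" "q < 1"
    and X: "\<And>k. pmf X k = logarithmic_pmf p k"
    and Y: "\<And>k. pmf Y k = logarithmic_pmf q k"
  shows "p \<le> q \<Longrightarrow> measure Y {..m} \<le> measure X {..m}"
    and "measure Y {..1} \<le> measure X {..1} \<Longrightarrow> p \<le> q"
proof -
  assume "p \<le> q"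
  show "measure Y {..m} \<le> measure X {..m}"
  proof (cases "p = q \<or> m = 0")
    case True
    then show ?thesis using log_cdf[OF assms(1,2) X] log_cdf[OF assms(3,4) Y] by auto
  next
    case False
    then show ?thesis using log_cdf[OF assms(1,2) X] log_cdf[OF assms(3,4) Y]
        key_strict[of p q m] assms \<open>p \<le> q\<close> by auto
  qed
next
  assume H: "measure Y {..1} \<le> measure X {..1}"
  show "p \<le> q"
  proof (rule ccontr)
    assume "\<not> p \<le> q"
    then show False using H log_cdf[OF assms(1,2) X] log_cdf[OF assms(3,4) Y]
        key_strict[of q p 1] assms by auto
  qed
qed

theorem mainTheorem13:
  fixes p q :: real and X Y :: "nat pmf"
  assumes "0 < p" "p < 1" "0 < q" "q < 1"
    and "\<And>k. pmf X k = logarithmic_pmf p k"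
    and "\<And>k. pmf Y k = logarithmic_pmf q k"
  shows "(st_le (measure_pmf (map_pmf real X)) (measure_pmf (map_pmf real Y)) \<longleftrightarrow> p \<le> q)
       \<and> (wd_le (measure_pmf (map_pmf real X)) (measure_pmf (map_pmf real Y)) \<longleftrightarrow> p \<le> q)"
proof -
  note C1 = cdf_cmp(1)[OF assms] and C2 = cdf_cmp(2)[OF assms]
  have zX: "pmf X 0 = 0" and zY: "pmf Y 0 = 0" using assms by (simp_all add: logarithmic_pmf_def)
  have mX: "\<And>i j. 1 \<le> i \<Longrightarrow> i \<le> j \<Longrightarrow> pmf X j \<le> pmf X i"
    using assms log_mono[of p] by simp
  have mY: "\<And>i j. 1 \<le> i \<Longrightarrow> i \<le> j \<Longrightarrow> pmf Y j \<le> pmf Y i"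
    using assms log_mono[of q] by simp
  have LX: "\<And>e. 0 < e \<Longrightarrow> levy_conc (measure_pmf (map_pmf real X)) e = measure X {..Suc (nat \<lfloor>e\<rfloor>)}"
    using levy_eq[OF _ zX mX] by blast
  have LY: "\<And>e. 0 < e \<Longrightarrow> levy_conc (measure_pmf (map_pmf real Y)) e = measure Y {..Suc (nat \<lfloor>e\<rfloor>)}"
    using levy_eq[OF _ zY mY] by blast
  have st: "st_le (measure_pmf (map_pmf real X)) (measure_pmf (map_pmf real Y)) \<longleftrightarrow> p \<le> q"
    unfolding st_iff using C1 C2 by blast
  have wd: "wd_le (measure_pmf (map_pmf real X)) (measure_pmf (map_pmf real Y)) \<longleftrightarrow> p \<le> q"
  proof
    assume "wd_le (measure_pmf (map_pmf real X)) (measure_pmf (map_pmf real Y))"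
    then have "levy_conc (measure_pmf (map_pmf real Y)) (1/2) \<le> levy_conc (measure_pmf (map_pmf real X)) (1/2)"
      unfolding wd_le_def by simp
    then have "measure Y {..1} \<le> measure X {..1}" using LX[of "1/2"] LY[of "1/2"] by simp
    then show "p \<le> q" by (rule C2)
  next
    assume "p \<le> q"
    then show "wd_le (measure_pmf (map_pmf real X)) (measure_pmf (map_pmf real Y))"
      unfolding wd_le_def using LX LY C1 by simp
  qed
  show ?thesis using st wd by blast
qed

end
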